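(* Let $d \ge 2$ be an integer, $\mu \in \mathbb{S}^{d-1}$ and $\kappa \ge 0$. Let $X$ be a random vector on $\mathbb{S}^{d-1}=\{x\in\mathbb{R}^d : \|x\|_2=1\}$ with density (with respect to the surface measure on $\mathbb{S}^{d-1}$) proportional to $(1+\mu^\top x)^\kappa$, and let $T = \mu^\top X$. Then $T \overset{d}{=} 2Z - 1$ where $Z \sim \operatorname{Beta}(\alpha,\beta)$ with $\alpha = \frac{d-1}{2}+\kappa$ and $\beta = \frac{d-1}{2}$.
   Context: $\operatorname{Beta}(\alpha,\beta)$ denotes the distribution on $[0,1]$ with density $B(\alpha,\beta)^{-1} z^{\alpha-1}(1-z)^{\beta-1}$, where $B(a,b)=\Gamma(a)\Gamma(b)/\Gamma(a+b)$. The normalized distribution with density proportional to $(1+\mu^\top x)^\kappa$ on $\mathbb{S}^{d-1}$ is called the Power Spherical distribution with direction $\mu$ and concentration $\kappa$. *)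

theory Defs
  imports "HOL-Probability.Probability"
begin

text \<open>Surface measure on the unit sphere of \<open>real^'n\<close>, defined by the cone
construction: for a Borel set A of the sphere, sigma(A) = d * lambda({r x : 0 < r \<le> 1, x \<in> A}),
i.e. d times the pushforward of Lebesgue measure on the punctured unit ball under
x \<mapsto> x / norm x.  This is the standard (d-1)-dimensional surface (Hausdorff) measure.\<close>

definition sphere_measure :: "(real^'n) measure" where
  "sphere_measure =
     density
       (distr (restrict_space lborel (ball 0 1 - {0}))
              (restrict_space borel (sphere 0 1))
              (\<lambda>x. x /\<^sub>R norm x))
       (\<lambda>_. ennreal (real CARD('n)))"

definition beta_density :: "real \<Rightarrow> real \<Rightarrow> real \<Rightarrow> ennreal" where
  "beta_density a b z =
     (if 0 < z \<and> z < 1 then ennreal (z powr (a - 1) * (1 - z) powr (b - 1) / Beta a b) else 0)"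

definition beta_measure :: "real \<Rightarrow> real \<Rightarrow> real measure" where
  "beta_measure a b = density lborel (beta_density a b)"

end

theory Submission
  imports Defs
begin


definition PhiB :: "('a::euclidean_space \<Rightarrow> real) \<Rightarrow> 'a" where
  "PhiB y = (\<Sum>b\<in>Basis. y b *\<^sub>R b)"

lemma PhiB_measurable[measurable]: "PhiB \<in> borel_measurable (PiM Basis (\<lambda>_. lborel))"
  unfolding PhiB_def by measurable

lemma inner_PhiB: "v \<in> Basis \<Longrightarrow> PhiB y \<bullet> v = y v"
  unfolding PhiB_def by (simp add: inner_sum_left inner_Basis if_distrib cong: if_cong)

lemma PhiB_upd: "u \<in> Basis \<Longrightarrow> PhiB (y(u := z)) = PhiB y + (z - y u) *\<^sub>R u"
proof -
  assume u: "u \<in> Basis"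
  have "PhiB (y(u := z)) = z *\<^sub>R u + (\<Sum>b\<in>Basis - {u}. y b *\<^sub>R b)"
    unfolding PhiB_def using u by (simp add: sum.remove[of Basis u])
  also have "PhiB y = y u *\<^sub>R u + (\<Sum>b\<in>Basis - {u}. y b *\<^sub>R b)"
    unfolding PhiB_def using u by (simp add: sum.remove[of Basis u])
  ultimately show ?thesis by (simp add: algebra_simps)
qed

lemma nn_integral_lborel_PhiB:
  assumes [measurable]: "f \<in> borel_measurable borel"
  shows "(\<integral>\<^sup>+x. f x \<partial>(lborel::'a::euclidean_space measure)) = (\<integral>\<^sup>+y. f (PhiB y) \<partial>PiM Basis (\<lambda>_. lborel))"
  by (subst lborel_eq) (simp add: nn_integral_distr PhiB_def[symmetric])

lemma shear_invariant:
  fixes u v :: "'a::euclidean_space"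
  assumes u: "u \<in> Basis" and v: "v \<in> Basis" and uv: "u \<noteq> v"
    and f[measurable]: "f \<in> borel_measurable borel"
  shows "(\<integral>\<^sup>+x. f (x + (a * (x \<bullet> v)) *\<^sub>R u) \<partial>lborel) = (\<integral>\<^sup>+x. f x \<partial>lborel)"
proof -
  interpret product_sigma_finite "\<lambda>_::'a. lborel :: real measure" by standard
  let ?I = "Basis - {u} :: 'a set"
  have ins: "insert u ?I = Basis" using u by auto
  have PB: "PiM Basis (\<lambda>_. lborel) = PiM (insert u ?I) (\<lambda>_::'a. lborel :: real measure)"
    by (simp only: ins)
  have [measurable]: "(\<lambda>y. f (PhiB y + (a * y v) *\<^sub>R u)) \<in> borel_measurable (PiM Basis (\<lambda>_. lborel))"
    using v by measurable
  have [measurable]: "(\<lambda>y. f (PhiB y)) \<in> borel_measurable (PiM Basis (\<lambda>_. lborel))"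
    by measurable
  have "(\<integral>\<^sup>+x. f (x + (a * (x \<bullet> v)) *\<^sub>R u) \<partial>lborel)
      = (\<integral>\<^sup>+y. f (PhiB y + (a * y v) *\<^sub>R u) \<partial>PiM (insert u ?I) (\<lambda>_. lborel))"
    by (subst nn_integral_lborel_PhiB) (auto simp: insert_absorb[OF u] inner_PhiB v)
  also have "\<dots> = (\<integral>\<^sup>+z. (\<integral>\<^sup>+s. f (PhiB (z(u:=s)) + (a * (z(u:=s)) v) *\<^sub>R u) \<partial>lborel) \<partial>PiM ?I (\<lambda>_. lborel))"
    by (subst product_nn_integral_insert) (auto simp: insert_absorb[OF u])
  also have "\<dots> = (\<integral>\<^sup>+z. (\<integral>\<^sup>+s. f (PhiB (z(u:=(a * z v) + s))) \<partial>lborel) \<partial>PiM ?I (\<lambda>_. lborel))"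
    using uv u by (intro nn_integral_cong) (simp add: PhiB_upd algebra_simps)
  also have "\<dots> = (\<integral>\<^sup>+z. (\<integral>\<^sup>+s. f (PhiB (z(u:=s))) \<partial>lborel) \<partial>PiM ?I (\<lambda>_. lborel))"
  proof (rule nn_integral_cong)
    fix z :: "'a \<Rightarrow> real" assume "z \<in> space (PiM ?I (\<lambda>_. lborel))"
    have "(\<integral>\<^sup>+s. f (PhiB (z(u:=s))) \<partial>lborel) = (\<integral>\<^sup>+s. f (PhiB (z(u:=s))) \<partial>distr lborel borel ((+) (a * z v)))"
      by (simp add: lborel_distr_plus)
    also have "\<dots> = (\<integral>\<^sup>+s. f (PhiB (z(u:=(a * z v) + s))) \<partial>lborel)"
      using u by (subst nn_integral_distr) (auto simp: PhiB_upd)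
    finally show "(\<integral>\<^sup>+s. f (PhiB (z(u:=(a * z v) + s))) \<partial>lborel) = (\<integral>\<^sup>+s. f (PhiB (z(u:=s))) \<partial>lborel)" by (rule sym)
  qed
  also have "\<dots> = (\<integral>\<^sup>+y. f (PhiB y) \<partial>PiM (insert u ?I) (\<lambda>_. lborel))"
    by (subst product_nn_integral_insert) (auto simp: insert_absorb[OF u])
  also have "\<dots> = (\<integral>\<^sup>+x. f x \<partial>lborel)"
    by (subst nn_integral_lborel_PhiB) (auto simp: insert_absorb[OF u])
  finally show ?thesis .
qed

lemma sR2: "(a * 2) *\<^sub>R (u::'a::real_vector) = a *\<^sub>R u + a *\<^sub>R u"
  "(a * (b * 2)) *\<^sub>R (u::'a::real_vector) = (a * b) *\<^sub>R u + (a * b) *\<^sub>R u"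
  by (simp_all add: scaleR_add_left[symmetric])

definition rot :: "'a::euclidean_space \<Rightarrow> 'a \<Rightarrow> real \<Rightarrow> real \<Rightarrow> 'a \<Rightarrow> 'a" where
  "rot u v c s x = x + ((c - 1) * (x \<bullet> u) - s * (x \<bullet> v)) *\<^sub>R u + (s * (x \<bullet> u) + (c - 1) * (x \<bullet> v)) *\<^sub>R v"

lemma rot_measurable[measurable]: "rot u v c s \<in> borel_measurable borel"
  unfolding rot_def by measurable

lemma rot_invariant_aux:
  fixes u v :: "'a::euclidean_space"
  assumes u: "u \<in> Basis" and v: "v \<in> Basis" and uv: "u \<noteq> v"
    and f[measurable]: "f \<in> borel_measurable borel"
    and cs: "c\<^sup>2 + s\<^sup>2 = 1" and c1: "c \<noteq> -1"
  shows "(\<integral>\<^sup>+x. f (rot u v c s x) \<partial>lborel) = (\<integral>\<^sup>+x. f x \<partial>lborel)"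
proof -
  define t where "t = s / (1 + c)"
  have c1': "1 + c \<noteq> 0" using c1 by auto
  have ts: "t * s = 1 - c"
  proof -
    have "t * s = s\<^sup>2 / (1 + c)" unfolding t_def by (simp add: power2_eq_square)
    also have "s\<^sup>2 = (1 - c) * (1 + c)" using cs by (simp add: algebra_simps power2_eq_square)
    finally show ?thesis using c1' by simp
  qed
  have tc: "t * (1 + c) = s" unfolding t_def using c1' by simp
  define S1 where "S1 x = x + (- t * (x \<bullet> v)) *\<^sub>R u" for x :: 'a
  define S2 where "S2 x = x + (s * (x \<bullet> u)) *\<^sub>R v" for x :: 'a
  have [measurable]: "S1 \<in> borel_measurable borel" "S2 \<in> borel_measurable borel"
    unfolding S1_def[abs_def] S2_def[abs_def] by measurable
  have uu: "u \<bullet> u = 1" "v \<bullet> v = 1" "u \<bullet> v = 0" "v \<bullet> u = 0"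
    using u v uv by (auto simp: inner_Basis)
  have eq: "rot u v c s x = S1 (S2 (S1 x))" for x
  proof -
    define p where "p = x \<bullet> u"
    define q where "q = x \<bullet> v"
    have "S1 (S2 (S1 x)) = x + (- t * q) *\<^sub>R u + (s * (p - t * q)) *\<^sub>R v + (- t * (q + s * (p - t * q))) *\<^sub>R u"
      unfolding S1_def S2_def p_def q_def by (simp add: inner_add_left inner_scaleR_left uu algebra_simps sR2)
    also have "\<dots> = x + ((- t * q) + (- t * (q + s * (p - t * q)))) *\<^sub>R u + (s * (p - t * q)) *\<^sub>R v"
      by (simp add: algebra_simps sR2)
    also have "(- t * q) + (- t * (q + s * (p - t * q))) = (c - 1) * p - s * q"
    proof -
      have "(- t * q) + (- t * (q + s * (p - t * q))) = - (t * s) * p + t * q * (t * s - 2)"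
        by (simp add: algebra_simps)
      also have "\<dots> = (c - 1) * p - (t * (1 + c)) * q" by (simp only: ts) (simp add: algebra_simps)
      finally show ?thesis by (simp add: tc)
    qed
    also have "s * (p - t * q) = s * p + (c - 1) * q"
    proof -
      have "s * (p - t * q) = s * p - (t * s) * q" by (simp add: algebra_simps)
      thus ?thesis by (simp only: ts) (simp add: algebra_simps)
    qed
    finally show ?thesis unfolding rot_def p_def q_def by simp
  qed
  have "(\<integral>\<^sup>+x. f (rot u v c s x) \<partial>lborel) = (\<integral>\<^sup>+x. (\<lambda>y. f (S1 (S2 y))) (S1 x) \<partial>lborel)"
    by (simp add: eq)
  also have "\<dots> = (\<integral>\<^sup>+x. (\<lambda>y. f (S1 y)) (S2 x) \<partial>lborel)"
    unfolding S1_def[of x for x] by (rule shear_invariant[OF u v uv]) measurable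
  also have "\<dots> = (\<integral>\<^sup>+x. f (S1 x) \<partial>lborel)"
    unfolding S2_def[of x for x] by (rule shear_invariant[OF v u uv[symmetric]]) measurable
  also have "\<dots> = (\<integral>\<^sup>+x. f x \<partial>lborel)"
    unfolding S1_def by (rule shear_invariant[OF u v uv]) measurable
  finally show ?thesis .
qed

lemma rot_invariant:
  fixes u v :: "'a::euclidean_space"
  assumes u: "u \<in> Basis" and v: "v \<in> Basis" and uv: "u \<noteq> v"
    and f[measurable]: "f \<in> borel_measurable borel"
    and cs: "c\<^sup>2 + s\<^sup>2 = 1"
  shows "(\<integral>\<^sup>+x. f (rot u v c s x) \<partial>lborel) = (\<integral>\<^sup>+x. f x \<partial>lborel)"
proof (cases "c = -1")
  case False thus ?thesis using rot_invariant_aux[OF assms] by simp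
next
  case True
  then have s0: "s = 0" using cs by (simp add: power2_eq_square)
  have uu: "u \<bullet> u = 1" "v \<bullet> v = 1" "u \<bullet> v = 0" "v \<bullet> u = 0"
    using u v uv by (auto simp: inner_Basis)
  have eq: "rot u v c s x = rot u v 0 1 (rot u v 0 1 x)" for x
    unfolding rot_def True s0 by (simp add: inner_add_left inner_scaleR_left uu algebra_simps sR2)
  have "(\<integral>\<^sup>+x. f (rot u v c s x) \<partial>lborel) = (\<integral>\<^sup>+x. (\<lambda>y. f (rot u v 0 1 y)) (rot u v 0 1 x) \<partial>lborel)"
    by (simp add: eq)
  also have "\<dots> = (\<integral>\<^sup>+x. f (rot u v 0 1 x) \<partial>lborel)"
    by (rule rot_invariant_aux[OF u v uv]) auto
  also have "\<dots> = (\<integral>\<^sup>+x. f x \<partial>lborel)"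
    by (rule rot_invariant_aux[OF u v uv]) auto
  finally show ?thesis .
qed


lemma rot_inner_self:
  fixes u v :: "'a::euclidean_space"
  assumes u: "u \<in> Basis" and v: "v \<in> Basis" and uv: "u \<noteq> v" and cs: "c\<^sup>2 + s\<^sup>2 = 1"
  shows "norm (rot u v c s x) = norm x"
proof -
  have uu: "u \<bullet> u = 1" "v \<bullet> v = 1" "u \<bullet> v = 0" "v \<bullet> u = 0"
    using u v uv by (auto simp: inner_Basis)
  define p where "p = x \<bullet> u"
  define q where "q = x \<bullet> v"
  have pq: "u \<bullet> x = p" "v \<bullet> x = q" by (simp_all add: p_def q_def inner_commute)
  have "rot u v c s x \<bullet> rot u v c s x = x \<bullet> x + ((c*p - s*q)\<^sup>2 + (s*p + c*q)\<^sup>2 - p\<^sup>2 - q\<^sup>2)"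
    unfolding rot_def p_def[symmetric] q_def[symmetric]
    by (simp add: inner_add_left inner_add_right inner_scaleR_left inner_scaleR_right uu pq
                  p_def[symmetric] q_def[symmetric] power2_eq_square algebra_simps)
  also have "(c*p - s*q)\<^sup>2 + (s*p + c*q)\<^sup>2 - p\<^sup>2 - q\<^sup>2 = (c\<^sup>2 + s\<^sup>2 - 1) * (p\<^sup>2 + q\<^sup>2)"
    by (simp add: power2_eq_square algebra_simps)
  finally have "rot u v c s x \<bullet> rot u v c s x = x \<bullet> x" using cs by simp
  thus ?thesis by (simp add: norm_eq_sqrt_inner)
qed

lemma rot_inner_transpose:
  fixes u v :: "'a::euclidean_space"
  assumes u: "u \<in> Basis" and v: "v \<in> Basis" and uv: "u \<noteq> v"
  shows "m \<bullet> rot u v c s x = rot u v c (-s) m \<bullet> x"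
proof -
  have uu: "u \<bullet> u = 1" "v \<bullet> v = 1" "u \<bullet> v = 0" "v \<bullet> u = 0"
    using u v uv by (auto simp: inner_Basis)
  show ?thesis unfolding rot_def
    by (simp add: inner_add_left inner_add_right inner_scaleR_left inner_scaleR_right uu
                  inner_commute algebra_simps)
qed

lemma rot_nth:
  "(rot (axis p 1) (axis q 1) c s (x::real^'n)) $ i =
     x $ i + (if i = p then (c - 1) * x$p - s * x$q else 0) + (if i = q then s * x$p + (c - 1) * x$q else 0)"
proof -
  have ax: "axis k 1 $ i = (if i = k then 1 else 0)" for k :: 'n
    by (simp add: axis_def)
  show ?thesis by (simp add: rot_def inner_axis ax)
qed

lemma inner_vec_single:
  fixes m x :: "real^'n"
  assumes "\<And>i. i \<noteq> k \<Longrightarrow> m$i = 0"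
  shows "m \<bullet> x = m$k * x$k"
proof -
  have "m \<bullet> x = (\<Sum>i\<in>UNIV. m$i * x$i)" by (simp add: inner_vec_def)
  also have "\<dots> = m$k * x$k" using assms by (subst sum.remove[of UNIV k]) auto
  finally show ?thesis .
qed

lemma givens_aux:
  fixes k0 :: "'n::finite"
  assumes n2: "CARD('n) \<ge> 2"
  shows "\<forall>m::real^'n. card {i. i \<noteq> k0 \<and> m$i \<noteq> 0} = n \<longrightarrow>
           (\<forall>F \<in> borel_measurable (borel \<Otimes>\<^sub>M borel).
              (\<integral>\<^sup>+x. F (m \<bullet> x, norm x) \<partial>lborel) = (\<integral>\<^sup>+x. F (norm m * x$k0, norm x) \<partial>lborel))"
proof (induction n)
  case 0
  show ?case
  proof (intro allI impI ballI)
    fix m :: "real^'n" and F :: "real \<times> real \<Rightarrow> ennreal"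
    assume c: "card {i. i \<noteq> k0 \<and> m$i \<noteq> 0} = 0" and F[measurable]: "F \<in> borel_measurable (borel \<Otimes>\<^sub>M borel)"
    have z: "i \<noteq> k0 \<Longrightarrow> m$i = 0" for i using c by auto
    have mx: "m \<bullet> x = m$k0 * x$k0" for x by (rule inner_vec_single) (use z in auto)
    have nm: "norm m = \<bar>m$k0\<bar>"
      by (simp add: norm_eq_sqrt_inner mx)
    show "(\<integral>\<^sup>+x. F (m \<bullet> x, norm x) \<partial>lborel) = (\<integral>\<^sup>+x. F (norm m * x$k0, norm x) \<partial>lborel)"
    proof (cases "m$k0 \<ge> 0")
      case True thus ?thesis by (simp add: mx nm)
    next
      case False
      obtain j :: 'n where j: "j \<noteq> k0"
      proof -
        have "\<not> (UNIV::'n set) \<subseteq> {k0}"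
        proof
          assume "(UNIV::'n set) \<subseteq> {k0}"
          then have "CARD('n) \<le> card {k0}" by (intro card_mono) auto
          with n2 show False by simp
        qed
        then show ?thesis using that by auto
      qed
      let ?u = "axis k0 1 :: real^'n" and ?v = "axis j 1 :: real^'n"
      have uB: "?u \<in> Basis" "?v \<in> Basis" "?u \<noteq> ?v" using j by (auto simp: axis_eq_axis)
      have "(\<integral>\<^sup>+x. F (\<bar>m$k0\<bar> * x$k0, norm x) \<partial>lborel)
          = (\<integral>\<^sup>+x. (\<lambda>y. F (\<bar>m$k0\<bar> * y$k0, norm y)) (rot ?u ?v (-1) 0 x) \<partial>lborel)"
        by (rule rot_invariant[symmetric, OF uB]) auto
      also have "\<dots> = (\<integral>\<^sup>+x. F (m \<bullet> x, norm x) \<partial>lborel)"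
        using False j by (simp add: rot_nth rot_inner_self[OF uB] mx)
      finally show ?thesis by (simp add: nm)
    qed
  qed
next
  case (Suc n)
  show ?case
  proof (intro allI impI ballI)
    fix m :: "real^'n" and F :: "real \<times> real \<Rightarrow> ennreal"
    assume c: "card {i. i \<noteq> k0 \<and> m$i \<noteq> 0} = Suc n" and F[measurable]: "F \<in> borel_measurable (borel \<Otimes>\<^sub>M borel)"
    obtain j where j: "j \<in> {i. i \<noteq> k0 \<and> m$i \<noteq> 0}" using c by (metis card.empty ex_in_conv nat.distinct(1))
    have jk: "j \<noteq> k0" "k0 \<noteq> j" "m$j \<noteq> 0" using j by auto
    let ?u = "axis k0 1 :: real^'n" and ?v = "axis j 1 :: real^'n"
    have uB: "?u \<in> Basis" "?v \<in> Basis" "?u \<noteq> ?v" using j by (auto simp: axis_eq_axis)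
    define \<rho> where "\<rho> = sqrt ((m$k0)\<^sup>2 + (m$j)\<^sup>2)"
    have \<rho>pos: "\<rho> > 0" using j unfolding \<rho>_def by (simp add: add_nonneg_pos)
    have \<rho>2: "\<rho>\<^sup>2 = (m$k0)\<^sup>2 + (m$j)\<^sup>2" unfolding \<rho>_def by simp
    define c where "c = m$k0 / \<rho>"
    define s where "s = m$j / \<rho>"
    have "c\<^sup>2 + s\<^sup>2 = ((m$k0)\<^sup>2 + (m$j)\<^sup>2) / \<rho>\<^sup>2"
      unfolding c_def s_def by (simp add: power_divide add_divide_distrib)
    then have cs: "c\<^sup>2 + s\<^sup>2 = 1" using \<rho>pos \<rho>2 j by simp
    have cs': "c\<^sup>2 + (-s)\<^sup>2 = 1" using cs by simp
    define m' where "m' = rot ?u ?v c (-s) m"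
    have m'k0: "m'$k0 = \<rho>"
    proof -
      have "m'$k0 = c * m$k0 + s * m$j" using jk by (simp add: m'_def rot_nth algebra_simps)
      also have "\<dots> = \<rho>\<^sup>2 / \<rho>" unfolding c_def s_def \<rho>2 by (simp add: power2_eq_square add_divide_distrib)
      finally show ?thesis by (simp add: power2_eq_square)
    qed
    have m'j: "m'$j = 0"
    proof -
      have "m'$j = c * m$j - s * m$k0" using jk by (simp add: m'_def rot_nth algebra_simps)
      thus ?thesis unfolding c_def s_def by (simp add: algebra_simps)
    qed
    have m'i: "i \<noteq> k0 \<Longrightarrow> i \<noteq> j \<Longrightarrow> m'$i = m$i" for i by (simp add: m'_def rot_nth)
    have "{i. i \<noteq> k0 \<and> m'$i \<noteq> 0} = {i. i \<noteq> k0 \<and> m$i \<noteq> 0} - {j}"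
      using m'i m'j by (auto, metis)
    then have cm': "card {i. i \<noteq> k0 \<and> m'$i \<noteq> 0} = n" using c j by simp
    have nm': "norm m' = norm m" unfolding m'_def by (rule rot_inner_self[OF uB cs'])
    have "(\<integral>\<^sup>+x. F (m \<bullet> x, norm x) \<partial>lborel)
        = (\<integral>\<^sup>+x. (\<lambda>y. F (m \<bullet> y, norm y)) (rot ?u ?v c s x) \<partial>lborel)"
      by (rule rot_invariant[symmetric, OF uB _ cs]) auto
    also have "\<dots> = (\<integral>\<^sup>+x. F (m' \<bullet> x, norm x) \<partial>lborel)"
      by (simp add: rot_inner_self[OF uB cs] rot_inner_transpose[OF uB] m'_def)
    also have "\<dots> = (\<integral>\<^sup>+x. F (norm m' * x$k0, norm x) \<partial>lborel)"
      using Suc.IH cm' F by blast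
    finally show "(\<integral>\<^sup>+x. F (m \<bullet> x, norm x) \<partial>lborel) = (\<integral>\<^sup>+x. F (norm m * x$k0, norm x) \<partial>lborel)"
      by (simp add: nm')
  qed
qed

lemma givens:
  fixes k0 :: "'n::finite" and m :: "real^'n"
  assumes n2: "CARD('n) \<ge> 2" and F: "F \<in> borel_measurable (borel \<Otimes>\<^sub>M borel)"
  shows "(\<integral>\<^sup>+x. F (m \<bullet> x, norm x) \<partial>lborel) = (\<integral>\<^sup>+x. F (norm m * x$k0, norm x) \<partial>lborel)"
  using givens_aux[OF n2, of k0 "card {i. i \<noteq> k0 \<and> m$i \<noteq> 0}"] F by blast



lemma PiM_scale:
  fixes I :: "'i set"
  assumes "finite I" "c > 0"
  shows "F \<in> borel_measurable (PiM I (\<lambda>_. lborel)) \<Longrightarrow>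
    (\<integral>\<^sup>+y. F (\<lambda>i\<in>I. c * y i) \<partial>PiM I (\<lambda>_. lborel)) =
      ennreal ((1/c)^card I) * (\<integral>\<^sup>+y. F y \<partial>PiM I (\<lambda>_. lborel :: real measure))"
  using assms(1)
proof (induction I arbitrary: F rule: finite_induct)
  case empty
  show ?case
    by (simp add: PiM_empty nn_integral_count_space_finite)
next
  case (insert i I F)
  interpret product_sigma_finite "\<lambda>_::'i. lborel :: real measure" by standard
  note Fm[measurable] = insert.prems
  let ?P = "PiM I (\<lambda>_. lborel :: real measure)"
  define K where "K w = (\<integral>\<^sup>+s. F (w(i:=s)) \<partial>lborel)" for w
  have Km[measurable]: "K \<in> borel_measurable ?P"
    unfolding K_def using insert.hyps by measurable
  have "(\<integral>\<^sup>+y. F (\<lambda>j\<in>insert i I. c * y j) \<partial>PiM (insert i I) (\<lambda>_. lborel))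
      = (\<integral>\<^sup>+z. (\<integral>\<^sup>+s. F (\<lambda>j\<in>insert i I. c * (z(i:=s)) j) \<partial>lborel) \<partial>?P)"
    using insert.hyps by (subst product_nn_integral_insert) auto
  also have "\<dots> = (\<integral>\<^sup>+z. (\<integral>\<^sup>+s. F ((\<lambda>j\<in>I. c * z j)(i := c * s)) \<partial>lborel) \<partial>?P)"
  proof (rule nn_integral_cong)
    fix z assume z: "z \<in> space ?P"
    have "(\<lambda>j\<in>insert i I. c * (z(i:=s)) j) = (\<lambda>j\<in>I. c * z j)(i := c * s)" for s
      using insert.hyps by (auto simp: restrict_def fun_eq_iff)
    then show "(\<integral>\<^sup>+s. F (\<lambda>j\<in>insert i I. c * (z(i:=s)) j) \<partial>lborel) = (\<integral>\<^sup>+s. F ((\<lambda>j\<in>I. c * z j)(i := c * s)) \<partial>lborel)"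
      by simp
  qed
  also have "\<dots> = (\<integral>\<^sup>+z. ennreal (1/c) * K (\<lambda>j\<in>I. c * z j) \<partial>?P)"
  proof (rule nn_integral_cong)
    fix z assume z: "z \<in> space ?P"
    have w: "(\<lambda>j\<in>I. c * z j) \<in> space ?P" by (auto simp: space_PiM)
    have [measurable]: "(\<lambda>s. F ((\<lambda>j\<in>I. c * z j)(i := s))) \<in> borel_measurable borel"
      using measurable_comp[OF measurable_component_update[OF w insert.hyps(2)] Fm]
      by (simp add: comp_def)
    have "K (\<lambda>j\<in>I. c * z j) = ennreal \<bar>c\<bar> * (\<integral>\<^sup>+s. F ((\<lambda>j\<in>I. c * z j)(i := 0 + c * s)) \<partial>lborel)"
      unfolding K_def using \<open>c > 0\<close> by (intro nn_integral_real_affine) auto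
    then have "(\<integral>\<^sup>+s. F ((\<lambda>j\<in>I. c * z j)(i := c * s)) \<partial>lborel) = ennreal (1/c) * K (\<lambda>j\<in>I. c * z j)"
      using \<open>c > 0\<close> by (simp add: ennreal_mult'[symmetric] mult.assoc[symmetric] ennreal_1[symmetric] del: ennreal_1) simp
    then show "(\<integral>\<^sup>+s. F ((\<lambda>j\<in>I. c * z j)(i := c * s)) \<partial>lborel) = ennreal (1/c) * K (\<lambda>j\<in>I. c * z j)" .
  qed
  also have "\<dots> = ennreal (1/c) * (\<integral>\<^sup>+z. K (\<lambda>j\<in>I. c * z j) \<partial>?P)"
    by (subst nn_integral_cmult) auto
  also have "\<dots> = ennreal (1/c) * (ennreal ((1/c)^card I) * (\<integral>\<^sup>+z. K z \<partial>?P))"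
    by (subst insert.IH[OF Km]) simp
  also have "(\<integral>\<^sup>+z. K z \<partial>?P) = (\<integral>\<^sup>+y. F y \<partial>PiM (insert i I) (\<lambda>_. lborel))"
    unfolding K_def using insert.hyps by (subst product_nn_integral_insert) auto
  finally show ?case
    using insert.hyps \<open>c > 0\<close> by (simp add: ennreal_mult'[symmetric] mult.assoc[symmetric])
qed


lemma inner_subst:
  fixes G :: "real \<Rightarrow> real" and q :: real
  assumes G[measurable]: "G \<in> borel_measurable borel" and G0: "\<And>t. 0 \<le> G t" and q: "q > 0"
  shows "(\<integral>\<^sup>+s. ennreal (indicator {s. s\<^sup>2 + q < 1} s * G (s / sqrt (s\<^sup>2 + q))) \<partial>lborel) =
         (\<integral>\<^sup>+t. ennreal (G t * sqrt q / ((1 - t\<^sup>2) * sqrt (1 - t\<^sup>2)) * indicator {t. q < 1 - t\<^sup>2} t) \<partial>lborel)"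
proof (cases "q < 1")
  case False
  have "\<not> s\<^sup>2 + q < 1" for s using False by (smt (verit) zero_le_power2)
  moreover have "\<not> q < 1 - t\<^sup>2" for t using False by (smt (verit) zero_le_power2)
  ultimately show ?thesis by (simp add: indicator_def)
next
  case True
  define a where "a = sqrt (1 - q)"
  have a0: "a > 0" using True by (simp add: a_def)
  have a2: "a\<^sup>2 = 1 - q" using True by (simp add: a_def)
  define g where "g s = s / sqrt (s\<^sup>2 + q)" for s
  define g' where "g' s = q / ((s\<^sup>2 + q) * sqrt (s\<^sup>2 + q))" for s
  define f where "f t = G t * sqrt q / ((1 - t\<^sup>2) * sqrt (1 - t\<^sup>2))" for t
  have Sq: "s\<^sup>2 + q > 0" for s using q by (smt (verit) zero_le_power2)
  have ga: "g a = a" "g (-a) = -a" using a2 by (simp_all add: g_def)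
  have AE1: "AE s in lborel. s \<notin> {-a, a}"
    by (intro AE_not_in countable_imp_null_set_lborel) auto
  have iff: "s\<^sup>2 + q < 1 \<longleftrightarrow> s \<in> {-a<..<a}" for s
  proof -
    have "s\<^sup>2 + q < 1 \<longleftrightarrow> s\<^sup>2 < a\<^sup>2" using a2 by auto
    also have "\<dots> \<longleftrightarrow> \<bar>s\<bar> < \<bar>a\<bar>" using abs_le_square_iff[of a s] by linarith
    finally show ?thesis using a0 by auto
  qed
  have iff2: "q < 1 - t\<^sup>2 \<longleftrightarrow> t \<in> {-a<..<a}" for t using iff[of t] by linarith
  have deriv: "(g has_real_derivative g' s) (at s)" for s
  proof -
    have "(g has_real_derivative (1 * sqrt (s\<^sup>2 + q) - s * ((2 * s) * inverse (sqrt (s\<^sup>2 + q)) / 2)) / (sqrt (s\<^sup>2 + q))\<^sup>2) (at s)"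
      unfolding g_def[abs_def] using Sq[of s]
      by (auto intro!: derivative_eq_intros)
    also have "(1 * sqrt (s\<^sup>2 + q) - s * ((2 * s) * inverse (sqrt (s\<^sup>2 + q)) / 2)) / (sqrt (s\<^sup>2 + q))\<^sup>2 = g' s"
    proof -
      have pos: "sqrt (s\<^sup>2 + q) > 0" using Sq[of s] by simp
      have sq: "sqrt (s\<^sup>2 + q) * sqrt (s\<^sup>2 + q) = s\<^sup>2 + q" using Sq[of s] by simp
      show ?thesis unfolding g'_def using pos Sq[of s]
        by (simp add: field_simps power2_eq_square sq)
    qed
    finally show ?thesis .
  qed
  have contg': "continuous_on {-a..a} g'"
    unfolding g'_def[abs_def] using Sq by (intro continuous_intros) (auto, metis less_irrefl)
  have g'0: "g' s \<ge> 0" for s unfolding g'_def using Sq[of s] q by simp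
  have fg: "f (g s) * g' s = G (g s)" for s
  proof -
    define S where "S = s\<^sup>2 + q"
    have S0: "S > 0" using Sq by (simp add: S_def)
    have gs: "g s = s / sqrt S" by (simp add: g_def S_def)
    have one: "1 - (g s)\<^sup>2 = q / S" using S0 by (simp add: gs power_divide field_simps S_def)
    have sq1: "sqrt (1 - (g s)\<^sup>2) = sqrt q / sqrt S" by (simp add: one real_sqrt_divide)
    have e1: "f (g s) = G (g s) * sqrt q / ((q / S) * (sqrt q / sqrt S))"
      by (simp only: f_def sq1 one real_sqrt_divide)
    have e2: "g' s = q / (S * sqrt S)" by (simp add: g'_def S_def)
    have "f (g s) * g' s = G (g s) * (sqrt q / (q / S * (sqrt q / sqrt S)) * (q / (S * sqrt S)))"
      unfolding e1 e2 by simp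
    also have "sqrt q / (q / S * (sqrt q / sqrt S)) * (q / (S * sqrt S)) = 1"
      using S0 q by (simp add: field_simps)
    finally show ?thesis by simp
  qed
  have "(\<integral>\<^sup>+s. ennreal (indicator {s. s\<^sup>2 + q < 1} s * G (s / sqrt (s\<^sup>2 + q))) \<partial>lborel)
      = (\<integral>\<^sup>+s. ennreal (f (g s) * g' s * indicator {-a..a} s) \<partial>lborel)"
    by (intro nn_integral_cong_AE eventually_mono[OF AE1]) (auto simp: fg iff indicator_def g_def[symmetric])
  also have "\<dots> = (\<integral>\<^sup>+t. ennreal (f t * indicator {g (-a)..g a} t) \<partial>lborel)"
    using a0 deriv contg' g'0
    by (intro nn_integral_substitution[symmetric]) (auto simp: f_def set_borel_measurable_def)
  also have "\<dots> = (\<integral>\<^sup>+t. ennreal (G t * sqrt q / ((1 - t\<^sup>2) * sqrt (1 - t\<^sup>2)) * indicator {t. q < 1 - t\<^sup>2} t) \<partial>lborel)"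
    by (intro nn_integral_cong_AE eventually_mono[OF AE1]) (auto simp: ga iff2 indicator_def f_def)
  finally show ?thesis .
qed

lemma norm_PhiB: "norm (PhiB y :: 'a::euclidean_space) = sqrt (\<Sum>b\<in>Basis. (y b)\<^sup>2)"
proof -
  have "PhiB y \<bullet> PhiB y = (\<Sum>b\<in>Basis. (PhiB y \<bullet> b) * (PhiB y \<bullet> b))" by (rule euclidean_inner)
  also have "\<dots> = (\<Sum>b\<in>Basis. (y b)\<^sup>2)" by (simp add: inner_PhiB power2_eq_square)
  finally show ?thesis by (simp add: norm_eq_sqrt_inner)
qed

lemma AE_PiM_pos:
  fixes I :: "'i set"
  assumes I: "finite I" "I \<noteq> {}"
  shows "AE y in PiM I (\<lambda>_. lborel :: real measure). 0 < (\<Sum>i\<in>I. (y i)\<^sup>2)"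
proof -
  interpret product_sigma_finite "\<lambda>_::'i. lborel :: real measure" by standard
  obtain i0 where i0: "i0 \<in> I" using I by auto
  define A where "A i = (if i = i0 then {0} else UNIV :: real set)" for i
  have "emeasure (PiM I (\<lambda>_. lborel)) (Pi\<^sub>E I A) = (\<Prod>i\<in>I. emeasure lborel (A i))"
    using I by (intro emeasure_PiM) (auto simp: A_def)
  also have "\<dots> = 0" using I i0 by (intro prod_zero bexI[of _ i0]) (auto simp: A_def)
  finally have N: "Pi\<^sub>E I A \<in> null_sets (PiM I (\<lambda>_. lborel))"
    using I by (intro null_setsI) (auto simp: A_def intro!: sets_PiM_I_finite)
  show ?thesis
  proof (rule AE_I'[OF N], intro subsetI)
    fix y assume "y \<in> {y \<in> space (PiM I (\<lambda>_. lborel :: real measure)). \<not> 0 < (\<Sum>i\<in>I. (y i)\<^sup>2)}"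
    then have y: "y \<in> space (PiM I (\<lambda>_. lborel :: real measure))" and nz: "\<not> 0 < (\<Sum>i\<in>I. (y i)\<^sup>2)" by auto
    have "(\<Sum>i\<in>I. (y i)\<^sup>2) = 0" using nz by (simp add: not_less antisym sum_nonneg)
    then have "\<forall>i\<in>I. (y i)\<^sup>2 = 0" using I sum_nonneg_eq_0_iff[of I "\<lambda>i. (y i)\<^sup>2"] by simp
    then show "y \<in> Pi\<^sub>E I A" using y by (auto simp: A_def space_PiM PiE_def)
  qed
qed

definition Jc :: "'i set \<Rightarrow> ennreal" where
  "Jc I = (\<integral>\<^sup>+y. ennreal (if (\<Sum>i\<in>I. (y i)\<^sup>2) < 1 then sqrt (\<Sum>i\<in>I. (y i)\<^sup>2) else 0) \<partial>PiM I (\<lambda>_. lborel))"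

lemma JJ_scale:
  fixes I :: "'i set"
  assumes I: "finite I" and \<rho>: "\<rho> > 0"
  shows "(\<integral>\<^sup>+y. ennreal (if (\<Sum>i\<in>I. (y i)\<^sup>2) < \<rho>\<^sup>2 then sqrt (\<Sum>i\<in>I. (y i)\<^sup>2) else 0) \<partial>PiM I (\<lambda>_. lborel))
         = ennreal (\<rho> ^ (card I + 1)) * Jc I"
proof -
  define F where "F y = ennreal (if (\<Sum>i\<in>I. (y i)\<^sup>2) < \<rho>\<^sup>2 then sqrt (\<Sum>i\<in>I. (y i)\<^sup>2) else 0)" for y :: "'i \<Rightarrow> real"
  have Fm: "F \<in> borel_measurable (PiM I (\<lambda>_. lborel))" unfolding F_def by measurable
  have "(\<integral>\<^sup>+y. F (\<lambda>i\<in>I. \<rho> * y i) \<partial>PiM I (\<lambda>_. lborel)) = ennreal ((1/\<rho>)^card I) * (\<integral>\<^sup>+y. F y \<partial>PiM I (\<lambda>_. lborel))"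
    by (rule PiM_scale[OF I \<rho> Fm])
  moreover have "(\<integral>\<^sup>+y. F (\<lambda>i\<in>I. \<rho> * y i) \<partial>PiM I (\<lambda>_. lborel)) = ennreal \<rho> * Jc I"
    unfolding Jc_def
  proof (subst nn_integral_cmult[symmetric], simp, rule nn_integral_cong)
    fix y :: "'i \<Rightarrow> real"
    have sq: "(\<Sum>i\<in>I. ((\<lambda>i\<in>I. \<rho> * y i) i)\<^sup>2) = \<rho>\<^sup>2 * (\<Sum>i\<in>I. (y i)\<^sup>2)"
      by (simp add: sum_distrib_left power_mult_distrib)
    have nn: "0 \<le> (\<Sum>i\<in>I. (y i)\<^sup>2)" by (simp add: sum_nonneg)
    show "F (\<lambda>i\<in>I. \<rho> * y i) = ennreal \<rho> * ennreal (if (\<Sum>i\<in>I. (y i)\<^sup>2) < 1 then sqrt (\<Sum>i\<in>I. (y i)\<^sup>2) else 0)"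
      unfolding F_def sq using \<rho> nn
      by (auto simp: real_sqrt_mult ennreal_mult'[symmetric] power2_eq_square)
  qed
  ultimately have "ennreal \<rho> * Jc I = ennreal ((1/\<rho>)^card I) * (\<integral>\<^sup>+y. F y \<partial>PiM I (\<lambda>_. lborel))" by simp
  then have "ennreal (\<rho> ^ card I) * (ennreal \<rho> * Jc I) = ennreal (\<rho> ^ card I) * ennreal ((1/\<rho>)^card I) * (\<integral>\<^sup>+y. F y \<partial>PiM I (\<lambda>_. lborel))"
    by (simp add: mult.assoc)
  also have "ennreal (\<rho> ^ card I) * ennreal ((1/\<rho>)^card I) = 1"
    using \<rho> by (simp add: ennreal_mult'[symmetric] power_mult_distrib[symmetric])
  finally show ?thesis
    using \<rho> by (simp add: F_def ennreal_mult'[symmetric] mult.assoc[symmetric] mult.commute)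
qed

lemma power_to_powr_aux:
  fixes t :: real and n :: nat
  assumes t: "\<bar>t\<bar> < 1"
  shows "sqrt (1 - t\<^sup>2) ^ n / ((1 - t\<^sup>2) * sqrt (1 - t\<^sup>2)) = (1 - t\<^sup>2) powr ((real n - 3) / 2)"
proof -
  define x where "x = 1 - t\<^sup>2"
  have x: "x > 0" using t unfolding x_def by (simp add: abs_square_less_1)
  define r where "r = sqrt x"
  have r: "r > 0" using x by (simp add: r_def)
  have rx: "r = x powr (1/2)" using x by (simp add: r_def powr_half_sqrt)
  have xr: "x = r\<^sup>2" using x by (simp add: r_def)
  have A: "x * r = r powr 3" using powr_realpow[OF r, of 3] by (simp add: xr power2_eq_square power3_eq_cube)
  have B: "r ^ n = r powr (real n)" using r by (simp add: powr_realpow)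
  have "r ^ n / (x * r) = r powr (real n - 3)"
    by (simp only: A B powr_diff)
  also have "\<dots> = x powr ((real n - 3) / 2)"
    unfolding rx using x by (simp add: powr_powr)
  finally show ?thesis by (simp add: x_def r_def)
qed

lemma K_axis:
  fixes u :: "'a::euclidean_space" and G :: "real \<Rightarrow> real"
  assumes u: "u \<in> Basis" and D: "DIM('a) \<ge> 2"
    and G[measurable]: "G \<in> borel_measurable borel" and G0: "\<And>t. 0 \<le> G t"
  shows "(\<integral>\<^sup>+x. ennreal (indicator (ball 0 1 - {0}) x * G ((x \<bullet> u) / norm x)) \<partial>lborel) =
     Jc (Basis - {u}) * (\<integral>\<^sup>+t. ennreal (G t * (indicator {-1<..<1} t * (1 - t\<^sup>2) powr ((real DIM('a) - 3) / 2))) \<partial>lborel)"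
proof -
  interpret product_sigma_finite "\<lambda>_::'a. lborel :: real measure" by standard
  define I where "I = Basis - {u}"
  have fin: "finite I" by (simp add: I_def)
  have cardI: "card I = DIM('a) - 1" using u by (simp add: I_def)
  have Ine: "I \<noteq> {}" using cardI D by auto
  have uI: "u \<notin> I" by (simp add: I_def)
  have ins: "insert u I = Basis" using u by (auto simp: I_def)
  interpret FP: finite_product_sigma_finite "\<lambda>_::'a. lborel :: real measure" I by standard (rule fin)
  interpret PS: pair_sigma_finite "PiM I (\<lambda>_. lborel :: real measure)" "lborel :: real measure"
    unfolding pair_sigma_finite_def using FP.sigma_finite_measure_axioms lborel.sigma_finite_measure_axioms by simp
  let ?P = "PiM I (\<lambda>_. lborel :: real measure)"
  define Q where "Q z = (\<Sum>i\<in>I. (z i)\<^sup>2)" for z :: "'a \<Rightarrow> real"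
  have Qm[measurable]: "Q \<in> borel_measurable ?P" unfolding Q_def by measurable
  have Q0: "Q z \<ge> 0" for z unfolding Q_def by (simp add: sum_nonneg)
  have Bm[measurable]: "ball 0 1 - {0} \<in> sets (borel :: 'a measure)" by auto
  define H where "H z t = ennreal (if Q z < 1 - t\<^sup>2 then G t * sqrt (Q z) / ((1 - t\<^sup>2) * sqrt (1 - t\<^sup>2)) else 0)" for z t
  have Hm[measurable]: "case_prod H \<in> borel_measurable (?P \<Otimes>\<^sub>M lborel)" unfolding H_def by measurable
  have "(\<integral>\<^sup>+x. ennreal (indicator (ball 0 1 - {0}) x * G ((x \<bullet> u) / norm x)) \<partial>lborel)
     = (\<integral>\<^sup>+y. ennreal (indicator (ball 0 1 - {0}) (PhiB y) * G ((PhiB y \<bullet> u) / norm (PhiB y))) \<partial>PiM (insert u I) (\<lambda>_. lborel))"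
    by (subst nn_integral_lborel_PhiB) (auto simp: ins)
  also have "\<dots> = (\<integral>\<^sup>+z. (\<integral>\<^sup>+s. ennreal (indicator (ball 0 1 - {0}) (PhiB (z(u:=s))) * G ((PhiB (z(u:=s)) \<bullet> u) / norm (PhiB (z(u:=s))))) \<partial>lborel) \<partial>?P)"
    using fin uI by (subst product_nn_integral_insert) (auto simp: ins)
  also have "\<dots> = (\<integral>\<^sup>+z. (\<integral>\<^sup>+t. H z t \<partial>lborel) \<partial>?P)"
  proof (rule nn_integral_cong_AE)
    show "AE z in ?P. (\<integral>\<^sup>+s. ennreal (indicator (ball 0 1 - {0}) (PhiB (z(u:=s))) * G ((PhiB (z(u:=s)) \<bullet> u) / norm (PhiB (z(u:=s))))) \<partial>lborel) = (\<integral>\<^sup>+t. H z t \<partial>lborel)"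
      using AE_PiM_pos[OF fin Ine]
    proof eventually_elim
      case (elim z)
      then have Qp: "Q z > 0" by (simp add: Q_def)
      have nrm: "norm (PhiB (z(u:=s))) = sqrt (s\<^sup>2 + Q z)" for s
      proof -
        have "(\<Sum>b\<in>Basis. ((z(u:=s)) b)\<^sup>2) = s\<^sup>2 + (\<Sum>b\<in>I. ((z(u:=s)) b)\<^sup>2)"
          using u by (simp add: I_def sum.remove[of Basis u])
        also have "(\<Sum>b\<in>I. ((z(u:=s)) b)\<^sup>2) = Q z" unfolding Q_def using uI by (intro sum.cong) auto
        finally show ?thesis by (simp add: norm_PhiB)
      qed
      have pos: "s\<^sup>2 + Q z > 0" for s using Qp by (smt (verit) zero_le_power2)
      have "(\<integral>\<^sup>+s. ennreal (indicator (ball 0 1 - {0}) (PhiB (z(u:=s))) * G ((PhiB (z(u:=s)) \<bullet> u) / norm (PhiB (z(u:=s))))) \<partial>lborel)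
          = (\<integral>\<^sup>+s. ennreal (indicator {s. s\<^sup>2 + Q z < 1} s * G (s / sqrt (s\<^sup>2 + Q z))) \<partial>lborel)"
      proof (rule nn_integral_cong)
        fix s :: real
        have "PhiB (z(u:=s)) \<in> ball 0 1 - {0} \<longleftrightarrow> norm (PhiB (z(u:=s))) < 1 \<and> norm (PhiB (z(u:=s))) \<noteq> 0"
          by simp
        also have "\<dots> \<longleftrightarrow> s\<^sup>2 + Q z < 1" using pos[of s] by (simp add: nrm)
        finally have "PhiB (z(u:=s)) \<in> ball 0 1 - {0} \<longleftrightarrow> s\<^sup>2 + Q z < 1" .
        then show "ennreal (indicator (ball 0 1 - {0}) (PhiB (z(u:=s))) * G ((PhiB (z(u:=s)) \<bullet> u) / norm (PhiB (z(u:=s)))))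
            = ennreal (indicator {s. s\<^sup>2 + Q z < 1} s * G (s / sqrt (s\<^sup>2 + Q z)))"
          using u by (simp add: indicator_def inner_PhiB nrm)
      qed
      also have "\<dots> = (\<integral>\<^sup>+t. ennreal (G t * sqrt (Q z) / ((1 - t\<^sup>2) * sqrt (1 - t\<^sup>2)) * indicator {t. Q z < 1 - t\<^sup>2} t) \<partial>lborel)"
        by (rule inner_subst[OF G G0 Qp])
      also have "\<dots> = (\<integral>\<^sup>+t. H z t \<partial>lborel)"
        by (intro nn_integral_cong) (simp add: H_def indicator_def)
      finally show ?case .
    qed
  qed
  also have "\<dots> = (\<integral>\<^sup>+t. (\<integral>\<^sup>+z. H z t \<partial>?P) \<partial>lborel)"
    by (rule PS.Fubini'[symmetric]) (rule Hm)
  also have "\<dots> = (\<integral>\<^sup>+t. ennreal (G t * (indicator {-1<..<1} t * (1 - t\<^sup>2) powr ((real DIM('a) - 3) / 2))) * Jc I \<partial>lborel)"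
  proof (rule nn_integral_cong)
    fix t :: real
    show "(\<integral>\<^sup>+z. H z t \<partial>?P) = ennreal (G t * (indicator {-1<..<1} t * (1 - t\<^sup>2) powr ((real DIM('a) - 3) / 2))) * Jc I"
    proof (cases "\<bar>t\<bar> < 1")
      case False
      then have "\<not> Q z < 1 - t\<^sup>2" for z using Q0[of z] abs_square_less_1[of t] by linarith
      moreover have "t \<notin> {-1<..<1}" using False by auto
      ultimately show ?thesis by (simp add: H_def)
    next
      case True
      define \<rho> where "\<rho> = sqrt (1 - t\<^sup>2)"
      have x: "1 - t\<^sup>2 > 0" using True by (simp add: abs_square_less_1)
      have \<rho>: "\<rho> > 0" "\<rho>\<^sup>2 = 1 - t\<^sup>2" using x by (simp_all add: \<rho>_def)
      define k where "k = G t / ((1 - t\<^sup>2) * \<rho>)"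
      have k0: "k \<ge> 0" using G0[of t] x \<rho> by (simp add: k_def)
      have "(\<integral>\<^sup>+z. H z t \<partial>?P) = (\<integral>\<^sup>+z. ennreal k * ennreal (if (\<Sum>i\<in>I. (z i)\<^sup>2) < \<rho>\<^sup>2 then sqrt (\<Sum>i\<in>I. (z i)\<^sup>2) else 0) \<partial>?P)"
      proof (intro nn_integral_cong)
        fix z :: "'a \<Rightarrow> real"
        have e: "G t * sqrt (Q z) / ((1 - t\<^sup>2) * sqrt (1 - t\<^sup>2)) = k * sqrt (Q z)"
          by (simp add: k_def \<rho>_def)
        show "H z t = ennreal k * ennreal (if (\<Sum>i\<in>I. (z i)\<^sup>2) < \<rho>\<^sup>2 then sqrt (\<Sum>i\<in>I. (z i)\<^sup>2) else 0)"
          unfolding Q_def[symmetric] \<rho>(2) H_def e using k0 Q0[of z] by (simp add: ennreal_mult)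
      qed
      also have "\<dots> = ennreal k * (ennreal (\<rho> ^ (card I + 1)) * Jc I)"
        by (subst nn_integral_cmult) (auto simp: JJ_scale[OF fin \<rho>(1)])
      also have "\<dots> = ennreal (k * \<rho> ^ (card I + 1)) * Jc I"
        using k0 \<rho> by (simp add: ennreal_mult' mult.assoc)
      also have "k * \<rho> ^ (card I + 1) = G t * (indicator {-1<..<1} t * (1 - t\<^sup>2) powr ((real DIM('a) - 3) / 2))"
      proof -
        have "card I + 1 = DIM('a)" using cardI D by simp
        then have "k * \<rho> ^ (card I + 1) = G t * (\<rho> ^ DIM('a) / ((1 - t\<^sup>2) * \<rho>))"
          by (simp add: k_def)
        also have "\<rho> ^ DIM('a) / ((1 - t\<^sup>2) * \<rho>) = (1 - t\<^sup>2) powr ((real DIM('a) - 3) / 2)"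
          unfolding \<rho>_def by (rule power_to_powr_aux[OF True])
        finally show ?thesis using True by (simp add: indicator_def abs_less_iff)
      qed
      finally show ?thesis .
    qed
  qed
  also have "\<dots> = Jc I * (\<integral>\<^sup>+t. ennreal (G t * (indicator {-1<..<1} t * (1 - t\<^sup>2) powr ((real DIM('a) - 3) / 2))) \<partial>lborel)"
    by (subst nn_integral_multc) (auto simp: mult.commute)
  finally show ?thesis by (simp add: I_def)
qed


lemma K_gen:
  fixes m :: "real^'n" and G :: "real \<Rightarrow> real"
  assumes n2: "CARD('n) \<ge> 2" and m: "norm m = 1"
    and G[measurable]: "G \<in> borel_measurable borel" and G0: "\<And>t. 0 \<le> G t"
  shows "(\<integral>\<^sup>+x. ennreal (indicator (ball 0 1 - {0}) x * G ((m \<bullet> x) / norm x)) \<partial>lborel) =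
     Jc (Basis - {axis (undefined::'n) (1::real)}) *
       (\<integral>\<^sup>+t. ennreal (G t * (indicator {-1<..<1} t * (1 - t\<^sup>2) powr ((real CARD('n) - 3) / 2))) \<partial>lborel)"
proof -
  define k0 :: 'n where "k0 = undefined"
  define F where "F pr = ennreal ((if 0 < snd pr \<and> snd pr < 1 then 1 else 0) * G (fst pr / snd pr))" for pr :: "real \<times> real"
  have Fm: "F \<in> borel_measurable (borel \<Otimes>\<^sub>M borel)" unfolding F_def by measurable
  have ind: "indicator (ball 0 1 - {0}) x = (if 0 < norm x \<and> norm x < (1::real) then 1 else (0::real))" for x :: "real^'n"
    by (auto simp: indicator_def)
  have "(\<integral>\<^sup>+x. ennreal (indicator (ball 0 1 - {0}) x * G ((m \<bullet> x) / norm x)) \<partial>lborel)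
      = (\<integral>\<^sup>+x. F (m \<bullet> x, norm x) \<partial>lborel)"
    by (simp add: F_def ind)
  also have "\<dots> = (\<integral>\<^sup>+x. F (norm m * x$k0, norm x) \<partial>lborel)"
    by (rule givens[OF n2 Fm])
  also have "\<dots> = (\<integral>\<^sup>+x. F (x $ k0, norm x) \<partial>lborel)"
    by (simp add: m)
  also have "\<dots> = (\<integral>\<^sup>+x. ennreal (indicator (ball 0 1 - {0}) x * G ((x \<bullet> axis k0 (1::real)) / norm x)) \<partial>lborel)"
  proof (rule nn_integral_cong)
    fix x :: "real^'n"
    have e: "x \<bullet> axis k0 (1::real) = x$k0" by (simp add: inner_axis)
    show "F (x$k0, norm x) = ennreal (indicator (ball 0 1 - {0}) x * G ((x \<bullet> axis k0 (1::real)) / norm x))"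
      unfolding e ind by (simp add: F_def)
  qed
  also have "\<dots> = Jc (Basis - {axis k0 (1::real)}) *
       (\<integral>\<^sup>+t. ennreal (G t * (indicator {-1<..<1} t * (1 - t\<^sup>2) powr ((real DIM(real^'n) - 3) / 2))) \<partial>lborel)"
    by (rule K_axis) (use n2 G0 in auto)
  finally show ?thesis by (simp add: k0_def)
qed

lemma sets_sphere_measure: "sets (sphere_measure :: (real^'n) measure) = sets (restrict_space borel (sphere 0 1))"
  by (simp add: sphere_measure_def)

lemma space_sphere_measure: "space (sphere_measure :: (real^'n) measure) = sphere 0 1"
  by (simp add: sphere_measure_def space_restrict_space)

lemma nn_integral_sphere_measure:
  assumes g: "g \<in> borel_measurable (sphere_measure :: (real^'n) measure)"
  shows "(\<integral>\<^sup>+x. g x \<partial>sphere_measure) =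
         ennreal (real CARD('n)) * (\<integral>\<^sup>+x. g (x /\<^sub>R norm x) * indicator (ball 0 1 - {0}) x \<partial>lborel)"
proof -
  let ?\<Omega> = "ball (0::real^'n) 1 - {0}"
  have gS: "g \<in> borel_measurable (restrict_space borel (sphere (0::real^'n) 1))"
    using g by (simp add: measurable_cong_sets[OF sets_sphere_measure refl])
  have N: "(\<lambda>x. x /\<^sub>R norm x) \<in> measurable (restrict_space lborel ?\<Omega>) (restrict_space borel (sphere 0 1))"
  proof (rule measurable_restrict_space2)
    show "(\<lambda>x. x /\<^sub>R norm x) \<in> space (restrict_space lborel ?\<Omega>) \<rightarrow> sphere 0 1"
      by (auto simp: space_restrict_space)
    show "(\<lambda>x. x /\<^sub>R norm x) \<in> measurable (restrict_space lborel ?\<Omega>) borel"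
      by (rule measurable_restrict_space1) simp
  qed
  have \<Omega>: "?\<Omega> \<inter> space lborel \<in> sets lborel" by auto
  have "(\<integral>\<^sup>+x. g x \<partial>sphere_measure) =
        (\<integral>\<^sup>+x. ennreal (real CARD('n)) * g x \<partial>distr (restrict_space lborel ?\<Omega>) (restrict_space borel (sphere 0 1)) (\<lambda>x. x /\<^sub>R norm x))"
    unfolding sphere_measure_def using gS by (subst nn_integral_density) auto
  also have "\<dots> = ennreal (real CARD('n)) * (\<integral>\<^sup>+x. g x \<partial>distr (restrict_space lborel ?\<Omega>) (restrict_space borel (sphere 0 1)) (\<lambda>x. x /\<^sub>R norm x))"
    using gS by (subst nn_integral_cmult) auto
  also have "(\<integral>\<^sup>+x. g x \<partial>distr (restrict_space lborel ?\<Omega>) (restrict_space borel (sphere 0 1)) (\<lambda>x. x /\<^sub>R norm x))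
      = (\<integral>\<^sup>+x. g (x /\<^sub>R norm x) \<partial>restrict_space lborel ?\<Omega>)"
    using gS N by (subst nn_integral_distr) auto
  also have "\<dots> = (\<integral>\<^sup>+x. g (x /\<^sub>R norm x) * indicator ?\<Omega> x \<partial>lborel)"
    by (rule nn_integral_restrict_space[OF \<Omega>])
  finally show ?thesis .
qed

lemma Beta_pos_real: "a > 0 \<Longrightarrow> b > 0 \<Longrightarrow> Beta a b > (0::real)"
  by (simp add: Beta_def Gamma_real_pos)

lemma beta_density_measurable[measurable]: "beta_density a b \<in> borel_measurable borel"
  unfolding beta_density_def by measurable

lemma beta_total:
  assumes a: "a > 0" and b: "b > 0"
  shows "(\<integral>\<^sup>+z. beta_density a b z \<partial>lborel) = 1"
proof -
  have "((\<lambda>z. z powr (a-1) * (1-z) powr (b-1)) has_integral Beta a b) {0<..<1}"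
    using has_integral_Beta_real[OF a b] by (simp add: has_integral_Icc_iff_Ioo)
  then have I: "(\<integral>\<^sup>+z. ennreal (z powr (a-1) * (1-z) powr (b-1)) * indicator {0<..<1} z \<partial>lborel) = ennreal (Beta a b)"
    by (intro nn_integral_has_integral_lebesgue') auto
  have B: "Beta a b > 0" using Beta_pos_real[OF a b] .
  have "(\<integral>\<^sup>+z. beta_density a b z \<partial>lborel) =
        (\<integral>\<^sup>+z. ennreal (1 / Beta a b) * (ennreal (z powr (a-1) * (1-z) powr (b-1)) * indicator {0<..<1} z) \<partial>lborel)"
    using B by (intro nn_integral_cong) (auto simp: beta_density_def ennreal_mult'[symmetric] indicator_def)
  also have "\<dots> = ennreal (1 / Beta a b) * ennreal (Beta a b)"
    by (subst nn_integral_cmult) (auto simp: I)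
  also have "\<dots> = 1" using B by (simp add: ennreal_mult'[symmetric])
  finally show ?thesis .
qed

lemma beta_shift:
  fixes a b \<kappa> e :: real
  assumes ab: "a - 1 = \<kappa> + e" "b - 1 = e"
  shows "beta_density a b (1/2 + 1/2 * t) =
     ennreal (1 / (2 powr (a-1) * 2 powr (b-1) * Beta a b) *
        ((1 + t) powr \<kappa> * (indicator {-1<..<1} t * (1 - t\<^sup>2) powr e)))"
proof (cases "t \<in> {-1<..<1}")
  case False
  then show ?thesis unfolding beta_density_def by (auto simp: indicator_def)
next
  case True
  have z: "1/2 + 1/2 * t = (1 + t) / 2" "1 - (1/2 + 1/2 * t) = (1 - t) / 2" by simp_all
  have pos: "0 < 1/2 + 1/2 * t \<and> 1/2 + 1/2 * t < (1::real)" using True by auto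
  have "((1 + t) / 2) powr (a - 1) * ((1 - t) / 2) powr (b - 1) / Beta a b
      = (1 + t) powr (a - 1) * (1 - t) powr (b - 1) / (2 powr (a-1) * 2 powr (b-1) * Beta a b)"
    by (simp add: powr_divide)
  also have "(1 + t) powr (a - 1) * (1 - t) powr (b - 1) = (1 + t) powr \<kappa> * (1 - t\<^sup>2) powr e"
  proof -
    have "(1 - t\<^sup>2) powr e = (1 + t) powr e * (1 - t) powr e"
      by (simp add: powr_mult[symmetric] power2_eq_square algebra_simps)
    then show ?thesis unfolding ab by (simp add: powr_add)
  qed
  finally show ?thesis using True pos by (simp add: beta_density_def z[symmetric])
qed

theorem theorem12:
  fixes M :: "'w measure"
    and X :: "'w \<Rightarrow> real^'n"
    and \<mu> :: "real^'n"
    and \<kappa> :: real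
  assumes "CARD('n) \<ge> 2"
    and "norm \<mu> = 1"
    and "\<kappa> \<ge> 0"
    and "prob_space M"
    and "\<exists>c>0. distributed M sphere_measure X
                 (\<lambda>x. ennreal (c * (1 + \<mu> \<bullet> x) powr \<kappa>))"
  shows "distr M borel (\<lambda>\<omega>. \<mu> \<bullet> X \<omega>)
         = distr (beta_measure ((real CARD('n) - 1) / 2 + \<kappa>) ((real CARD('n) - 1) / 2))
                 borel (\<lambda>z. 2 * z - 1)"
proof -
  note n2 = assms(1) and \<mu>1 = assms(2) and \<kappa>0 = assms(3)
  interpret prob_space M by (rule assms(4))
  define d where "d = real CARD('n)"
  have d2: "d \<ge> 2" using n2 by (simp add: d_def)
  from assms(5) obtain c where c: "c > 0" and dist: "distributed M sphere_measure X (\<lambda>x. ennreal (c * (1 + \<mu> \<bullet> x) powr \<kappa>))"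
    by blast
  define f where "f x = ennreal (c * (1 + \<mu> \<bullet> x) powr \<kappa>)" for x
  have Xm: "X \<in> measurable M sphere_measure" and dens: "distr M sphere_measure X = density sphere_measure f"
    and fm: "f \<in> borel_measurable sphere_measure"
    using dist by (auto simp: distributed_def f_def[abs_def])
  have ipm[measurable]: "(\<lambda>x. \<mu> \<bullet> x) \<in> measurable sphere_measure borel"
    by (simp add: measurable_cong_sets[OF sets_sphere_measure refl] measurable_restrict_space1)
  have Tm: "(\<lambda>\<omega>. \<mu> \<bullet> X \<omega>) \<in> measurable M borel"
    using measurable_comp[OF Xm ipm] by (simp add: comp_def)
  have Tdist: "distr M borel (\<lambda>\<omega>. \<mu> \<bullet> X \<omega>) = distr (density sphere_measure f) borel (\<lambda>x. \<mu> \<bullet> x)"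
    by (simp add: dens[symmetric] distr_distr[OF ipm Xm] comp_def)
  define a where "a = (d - 1) / 2 + \<kappa>"
  define b where "b = (d - 1) / 2"
  have b0: "b > 0" using d2 by (simp add: b_def)
  have a0: "a > 0" using b0 \<kappa>0 by (simp add: a_def b_def[symmetric])
  define w where "w t = indicator {-1<..<1} t * (1 - t\<^sup>2) powr ((d - 3) / 2)" for t :: real
  have wm[measurable]: "w \<in> borel_measurable borel" unfolding w_def by measurable
  define h where "h t = (1 + t) powr \<kappa> * w t" for t
  have h0: "h t \<ge> 0" for t by (simp add: h_def w_def)
  have hm[measurable]: "h \<in> borel_measurable borel" unfolding h_def w_def by measurable
  define HA where "HA A = (\<integral>\<^sup>+t. ennreal (h t * indicator A t) \<partial>lborel)" for A
  define C where "C = Jc (Basis - {axis (undefined::'n) (1::real)})"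
  define Kb where "Kb = 1 / (2 powr (a-1) * 2 powr (b-1) * Beta a b)"
  have Kb0: "Kb > 0" using Beta_pos_real[OF a0 b0] by (simp add: Kb_def)
  have LHS: "emeasure (distr M borel (\<lambda>\<omega>. \<mu> \<bullet> X \<omega>)) A = ennreal d * C * ennreal c * HA A"
    if A[measurable]: "A \<in> sets borel" for A
  proof -
    define G where "G t = c * (1 + t) powr \<kappa> * indicator A t" for t
    have Gm: "G \<in> borel_measurable borel" unfolding G_def by measurable
    have G0: "0 \<le> G t" for t using c by (simp add: G_def)
    have gm: "(\<lambda>x. f x * indicator A (\<mu> \<bullet> x)) \<in> borel_measurable sphere_measure"
      using fm by measurable
    have "emeasure (distr M borel (\<lambda>\<omega>. \<mu> \<bullet> X \<omega>)) A
        = emeasure (density sphere_measure f) ((\<lambda>x. \<mu> \<bullet> x) -` A \<inter> space sphere_measure)"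
      unfolding Tdist by (subst emeasure_distr) auto
    also have "\<dots> = (\<integral>\<^sup>+x. f x * indicator ((\<lambda>x. \<mu> \<bullet> x) -` A \<inter> space sphere_measure) x \<partial>sphere_measure)"
      using fm by (subst emeasure_density) auto
    also have "\<dots> = (\<integral>\<^sup>+x. f x * indicator A (\<mu> \<bullet> x) \<partial>sphere_measure)"
      by (intro nn_integral_cong) (auto simp: indicator_def)
    also have "\<dots> = ennreal d * (\<integral>\<^sup>+x. f (x /\<^sub>R norm x) * indicator A (\<mu> \<bullet> (x /\<^sub>R norm x)) * indicator (ball 0 1 - {0}) x \<partial>lborel)"
      unfolding d_def by (rule nn_integral_sphere_measure[OF gm])
    also have "(\<integral>\<^sup>+x. f (x /\<^sub>R norm x) * indicator A (\<mu> \<bullet> (x /\<^sub>R norm x)) * indicator (ball 0 1 - {0}) x \<partial>lborel)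
        = (\<integral>\<^sup>+x. ennreal (indicator (ball 0 1 - {0}) x * G ((\<mu> \<bullet> x) / norm x)) \<partial>lborel)"
    proof (intro nn_integral_cong)
      fix x :: "real^'n"
      have e: "\<mu> \<bullet> (x /\<^sub>R norm x) = (\<mu> \<bullet> x) / norm x" by (simp add: divide_inverse mult.commute)
      show "f (x /\<^sub>R norm x) * indicator A (\<mu> \<bullet> (x /\<^sub>R norm x)) * indicator (ball 0 1 - {0}) x
          = ennreal (indicator (ball 0 1 - {0}) x * G ((\<mu> \<bullet> x) / norm x))"
      proof -
        have e': "inverse (norm x) * (\<mu> \<bullet> x) = (\<mu> \<bullet> x) / norm x" by (simp add: divide_inverse mult.commute)
        show ?thesis by (simp add: f_def G_def indicator_def e e')
      qed
    qed
    also have "\<dots> = C * (\<integral>\<^sup>+t. ennreal (G t * w t) \<partial>lborel)"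
      unfolding C_def w_def d_def by (rule K_gen[OF n2 \<mu>1 Gm G0])
    also have "(\<integral>\<^sup>+t. ennreal (G t * w t) \<partial>lborel) = ennreal c * HA A"
      unfolding HA_def using c h0
      by (subst nn_integral_cmult[symmetric]) (auto intro!: nn_integral_cong simp: G_def h_def ennreal_mult'[symmetric] mult_ac)
    finally show ?thesis by (simp add: mult_ac)
  qed
  have RHS: "emeasure (distr (beta_measure a b) borel (\<lambda>z. 2 * z - 1)) A = ennreal (Kb / 2) * HA A"
    if A[measurable]: "A \<in> sets borel" for A
  proof -
    have "emeasure (distr (beta_measure a b) borel (\<lambda>z. 2 * z - 1)) A
        = (\<integral>\<^sup>+z. beta_density a b z * indicator A (2 * z - 1) \<partial>lborel)"
    proof -
      have pre: "(\<lambda>z::real. 2 * z - 1) -` A \<inter> space borel \<in> sets borel"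
        by (rule measurable_sets[OF _ A]) simp
      have "emeasure (distr (beta_measure a b) borel (\<lambda>z. 2 * z - 1)) A
          = emeasure (density lborel (beta_density a b)) ((\<lambda>z::real. 2 * z - 1) -` A \<inter> space borel)"
        unfolding beta_measure_def by (subst emeasure_distr) auto
      also have "\<dots> = (\<integral>\<^sup>+z. beta_density a b z * indicator ((\<lambda>z::real. 2 * z - 1) -` A \<inter> space borel) z \<partial>lborel)"
        using pre by (subst emeasure_density) auto
      also have "\<dots> = (\<integral>\<^sup>+z. beta_density a b z * indicator A (2 * z - 1) \<partial>lborel)"
        by (intro nn_integral_cong) (simp add: indicator_def)
      finally show ?thesis .
    qed
    also have "\<dots> = ennreal \<bar>1/2\<bar> * (\<integral>\<^sup>+t. beta_density a b (1/2 + 1/2 * t) * indicator A (2 * (1/2 + 1/2 * t) - 1) \<partial>lborel)"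
      by (rule nn_integral_real_affine) auto
    also have "(\<integral>\<^sup>+t. beta_density a b (1/2 + 1/2 * t) * indicator A (2 * (1/2 + 1/2 * t) - 1) \<partial>lborel)
        = (\<integral>\<^sup>+t. ennreal Kb * ennreal (h t * indicator A t) \<partial>lborel)"
    proof (intro nn_integral_cong)
      fix t :: real
      have "beta_density a b (1/2 + 1/2 * t) = ennreal (Kb * h t)"
        unfolding Kb_def h_def w_def by (rule beta_shift) (simp_all add: a_def b_def field_simps)
      then show "beta_density a b (1/2 + 1/2 * t) * indicator A (2 * (1/2 + 1/2 * t) - 1) = ennreal Kb * ennreal (h t * indicator A t)"
        using Kb0 h0[of t] by (simp add: ennreal_mult'[symmetric] indicator_def)
    qed
    also have "\<dots> = ennreal Kb * HA A"
      unfolding HA_def by (subst nn_integral_cmult) auto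
    moreover have h2: "ennreal (Kb / 2) = inverse 2 * ennreal Kb"
      using divide_ennreal[of Kb 2] Kb0 by (simp add: divide_ennreal_def mult.commute)
    ultimately show ?thesis by (simp add: h2 mult.assoc)
  qed
  have L1: "ennreal d * C * ennreal c * HA UNIV = 1"
  proof -
    have "emeasure (distr M borel (\<lambda>\<omega>. \<mu> \<bullet> X \<omega>)) UNIV = 1"
      using Tm by (subst emeasure_distr) (auto simp: emeasure_space_1)
    then show ?thesis using LHS[of UNIV] by simp
  qed
  have R1: "ennreal (Kb / 2) * HA UNIV = 1"
  proof -
    have "emeasure (distr (beta_measure a b) borel (\<lambda>z. 2 * z - 1)) UNIV = 1"
      unfolding beta_measure_def
      by (subst emeasure_distr) (auto simp: emeasure_density beta_total[OF a0 b0])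
    then show ?thesis using RHS[of UNIV] by simp
  qed
  have LR: "ennreal d * C * ennreal c = ennreal (Kb / 2)"
  proof -
    have "ennreal d * C * ennreal c = ennreal d * C * ennreal c * (ennreal (Kb / 2) * HA UNIV)"
      by (simp add: R1)
    also have "\<dots> = ennreal (Kb / 2) * (ennreal d * C * ennreal c * HA UNIV)"
      by (simp add: mult_ac)
    also have "\<dots> = ennreal (Kb / 2)" by (simp add: L1)
    finally show ?thesis .
  qed
  have "distr M borel (\<lambda>\<omega>. \<mu> \<bullet> X \<omega>) = distr (beta_measure a b) borel (\<lambda>z. 2 * z - 1)"
  proof (rule measure_eqI)
    show "sets (distr M borel (\<lambda>\<omega>. \<mu> \<bullet> X \<omega>)) = sets (distr (beta_measure a b) borel (\<lambda>z. 2 * z - 1))"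
      by simp
    fix A assume "A \<in> sets (distr M borel (\<lambda>\<omega>. \<mu> \<bullet> X \<omega>))"
    then have A: "A \<in> sets borel" by simp
    show "emeasure (distr M borel (\<lambda>\<omega>. \<mu> \<bullet> X \<omega>)) A = emeasure (distr (beta_measure a b) borel (\<lambda>z. 2 * z - 1)) A"
      using LHS[OF A] RHS[OF A] LR by simp
  qed
  then show ?thesis by (simp add: a_def b_def d_def)
qed

end
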